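(* Fix $k\in\{1,\dots,K\}$ and fix the transmit powers $\mathbf{p}_{-k}=(p_j)_{j\neq k}$ of all other users (so that the quantity $D_k>0$ below is fixed). Then the utility function $$u_k(p_k,\mathbf{p}_{-k}) \;=\; \ell_k\,\mathtt{w}\,\log_2\!\bigl(1+\theta_k\gamma_k\bigr)\,\frac{\bigl(1-e^{-\gamma_k}\bigr)^M}{p_k+p_c},\qquad \gamma_k=\frac{p_k|h_k|^2}{D_k},$$ is quasiconcave in $p_k$ on the strategy set $[0,P_{\max}]$, i.e. for all $x_1\neq x_2$ in $[0,P_{\max}]$ and all $\lambda\in(0,1)$, $$u_k(\lambda x_1+(1-\lambda)x_2,\mathbf{p}_{-k})\ \ge\ \min\{u_k(x_1,\mathbf{p}_{-k}),\,u_k(x_2,\mathbf{p}_{-k})\}.$$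
   Context: Uplink DS-CDMA with $K$ users. User $k$ transmits with power $p_k\ge 0$ over a complex channel gain $h_k\neq 0$. $\mathbf{s}_j\in\mathbb{R}^N$ is the unit-norm spreading code of user $j$, $\mathbf{d}_k\in\mathbb{R}^N$ is the linear receive filter for user $k$ (e.g. the matched filter $\mathbf{d}_k=\mathbf{s}_k$, or the $k$-th column of the decorrelator $\mathbf{S}(\mathbf{S}^T\mathbf{S})^{-1}$), normalized so that $\mathbf{d}_k^T\mathbf{s}_k=1$, and $\sigma_k^2>0$ is the noise variance. The SINR is $$\gamma_k=\frac{p_k|h_k|^2}{D_k},\qquad D_k=\sum_{j\neq k}p_j|h_j|^2(\mathbf{d}_k^T\mathbf{s}_j)^2+\sigma_k^2\,\mathbf{d}_k^T\mathbf{d}_k .$$ Constants: bandwidth $\mathtt{w}>0$; $M\ge 1$ is the packet length in bits and $L\le M$ the number of information bits, $\ell_k=L/M$; circuit power $p_c>0$; maximal transmit power $P_{\max}>0$; gap $\theta_k=-1.5/\ln(5\,\mathrm{BER}_k)\in(0,1)$ for a target bit error rate $\mathrm{BER}_k\in(0,1/5)$. The factor $(1-e^{-\gamma_k})^M$ is the efficiency function (probability of error-free packet reception). *)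

theory Defs
  imports "HOL-Analysis.Analysis"
begin

text \<open>Users are indexed by 0,...,K-1. Spreading codes and receive filters are vectors
  in R^N, with N represented by the finite index type 'n.\<close>

definition interf_noise ::
  "nat \<Rightarrow> (nat \<Rightarrow> real) \<Rightarrow> (nat \<Rightarrow> complex) \<Rightarrow> (nat \<Rightarrow> real ^ 'n) \<Rightarrow> (nat \<Rightarrow> real ^ 'n)
   \<Rightarrow> (nat \<Rightarrow> real) \<Rightarrow> nat \<Rightarrow> real" where
  "interf_noise K p h s d \<sigma>2 k =
     (\<Sum>j\<in>{..<K} - {k}. p j * (cmod (h j))\<^sup>2 * (d k \<bullet> s j)\<^sup>2) + \<sigma>2 k * (d k \<bullet> d k)"

definition sinr ::
  "nat \<Rightarrow> (nat \<Rightarrow> real) \<Rightarrow> (nat \<Rightarrow> complex) \<Rightarrow> (nat \<Rightarrow> real ^ 'n) \<Rightarrow> (nat \<Rightarrow> real ^ 'n)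
   \<Rightarrow> (nat \<Rightarrow> real) \<Rightarrow> nat \<Rightarrow> real" where
  "sinr K p h s d \<sigma>2 k = p k * (cmod (h k))\<^sup>2 / interf_noise K p h s d \<sigma>2 k"

definition gap :: "real \<Rightarrow> real" where
  "gap ber = - 1.5 / ln (5 * ber)"

definition utility ::
  "nat \<Rightarrow> (nat \<Rightarrow> real) \<Rightarrow> (nat \<Rightarrow> complex) \<Rightarrow> (nat \<Rightarrow> real ^ 'n) \<Rightarrow> (nat \<Rightarrow> real ^ 'n)
   \<Rightarrow> (nat \<Rightarrow> real) \<Rightarrow> real \<Rightarrow> nat \<Rightarrow> nat \<Rightarrow> real \<Rightarrow> real \<Rightarrow> nat \<Rightarrow> real" where
  "utility K p h s d \<sigma>2 w M L pc ber k =
     (let \<gamma> = sinr K p h s d \<sigma>2 k in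
      (real L / real M) * w * log 2 (1 + gap ber * \<gamma>) * (1 - exp (- \<gamma>)) ^ M / (p k + pc))"

end

theory Submission
  imports Defs
begin

lemma L1:
  fixes u1 u2 :: real
  assumes "0 < u1" "u1 \<le> u2"
  shows "u2 / (exp u2 - 1) \<le> u1 / (exp u1 - 1)"
proof -
  define t where "t = u1 / u2"
  have t0: "0 \<le> t" "t \<le> 1" using assms by (auto simp: t_def)
  have "exp ((1 - t) *\<^sub>R 0 + t *\<^sub>R u2) \<le> (1 - t) * exp 0 + t * exp u2"
    by (rule convex_onD[OF exp_convex]) (use t0 in auto)
  moreover have "(1 - t) *\<^sub>R 0 + t *\<^sub>R u2 = u1" using assms by (simp add: t_def)
  ultimately have e: "exp u1 - 1 \<le> t * (exp u2 - 1)" by (simp add: algebra_simps)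
  have p1: "exp u1 - 1 > 0" using assms by simp
  have p2: "exp u2 - 1 > 0" using assms by simp
  have "(exp u1 - 1) * u2 \<le> u1 * (exp u2 - 1)"
    using e assms by (simp add: t_def field_simps)
  then show ?thesis using p1 p2 assms by (simp add: field_simps)
qed

lemma L2:
  fixes w1 w2 :: real
  assumes "1 < w1" "w1 \<le> w2"
  shows "(w2 - 1) / (w2 * ln w2) \<le> (w1 - 1) / (w1 * ln w1)"
proof -
  let ?g = "\<lambda>w::real. w * ln w / (w - 1)"
  have "?g w1 \<le> ?g w2"
  proof (rule DERIV_nonneg_imp_increasing_open[OF assms(2)])
    fix x assume x: "w1 < x" "x < w2"
    then have x1: "x > 1" using assms by simp
    have "DERIV ?g x :> ((ln x + 1) * (x - 1) - x * ln x) / (x - 1)^2"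
      using x1 by (auto intro!: derivative_eq_intros simp: field_simps power2_eq_square)
    moreover have "((ln x + 1) * (x - 1) - x * ln x) / (x - 1)^2 \<ge> 0"
      using ln_le_minus_one[of x] x1 by (intro divide_nonneg_nonneg) (auto simp: algebra_simps)
    ultimately show "\<exists>y. DERIV ?g x :> y \<and> y \<ge> 0" by blast
  next
    show "continuous_on {w1..w2} ?g" using assms
      by (intro continuous_intros) auto
  qed
  moreover have "w1 * ln w1 > 0" "w2 * ln w2 > 0" using assms by auto
  ultimately show ?thesis using assms by (simp add: field_simps)
qed

lemma C3:
  fixes pc :: real assumes "pc > 0"
  shows "convex_on UNIV (\<lambda>z. ln (exp z + pc))"
proof (rule convex_on_realI[where f' = "\<lambda>z. exp z / (exp z + pc)"])
  fix x show "((\<lambda>z. ln (exp z + pc)) has_real_derivative exp x / (exp x + pc)) (at x)"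
    using assms by (auto intro!: derivative_eq_intros simp: add_pos_pos)
next
  fix x y :: real assume "x \<le> y"
  then have "exp x * pc \<le> exp y * pc" using assms by simp
  then show "exp x / (exp x + pc) \<le> exp y / (exp y + pc)"
    using assms by (simp add: field_simps add_pos_pos)
qed auto

lemma C2:
  fixes a :: real assumes "a > 0"
  shows "convex_on UNIV (\<lambda>z. - ln (1 - exp (- (a * exp z))))"
proof (rule convex_on_realI[where f' = "\<lambda>z. - (a * exp z / (exp (a * exp z) - 1))"])
  fix x
  have pos: "1 - exp (- (a * exp x)) > 0" using assms by simp
  have "((\<lambda>z. - ln (1 - exp (- (a * exp z)))) has_real_derivative
          - ((- (exp (- (a * exp x)) * (- (a * exp x)))) / (1 - exp (- (a * exp x))))) (at x)"
    using pos by (auto intro!: derivative_eq_intros)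
  moreover have "- ((- (exp (- (a * exp x)) * (- (a * exp x)))) / (1 - exp (- (a * exp x))))
     = - (a * exp x / (exp (a * exp x) - 1))"
  proof -
    have e: "exp (- (a * exp x)) = 1 / exp (a * exp x)" by (simp add: exp_minus field_simps)
    have "exp (a * exp x) > 1" using assms by simp
    then show ?thesis unfolding e by (simp add: field_simps)
  qed
  ultimately show "((\<lambda>z. - ln (1 - exp (- (a * exp z)))) has_real_derivative
          - (a * exp x / (exp (a * exp x) - 1))) (at x)" by simp
next
  fix x y :: real assume "x \<le> y"
  then have "a * exp x \<le> a * exp y" using assms by simp
  from L1[OF _ this] assms show "- (a * exp x / (exp (a * exp x) - 1)) \<le> - (a * exp y / (exp (a * exp y) - 1))"
    by simp
qed auto

lemma C1:
  fixes c :: real assumes "c > 0"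
  shows "convex_on UNIV (\<lambda>z. - ln (ln (1 + c * exp z)))"
proof (rule convex_on_realI[where f' = "\<lambda>z. - (((1 + c * exp z) - 1) / ((1 + c * exp z) * ln (1 + c * exp z)))"])
  fix x
  have w: "1 + c * exp x > 1" using assms by simp
  then have l: "ln (1 + c * exp x) > 0" by simp
  have "((\<lambda>z. - ln (ln (1 + c * exp z))) has_real_derivative
     - ((c * exp x / (1 + c * exp x)) / ln (1 + c * exp x))) (at x)"
    using w l by (auto intro!: derivative_eq_intros simp: field_simps)
  then show "((\<lambda>z. - ln (ln (1 + c * exp z))) has_real_derivative
     - (((1 + c * exp x) - 1) / ((1 + c * exp x) * ln (1 + c * exp x)))) (at x)"
    by (simp add: field_simps)
next
  fix x y :: real assume "x \<le> y"
  then have "1 + c * exp x \<le> 1 + c * exp y" using assms by simp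
  from L2[OF _ this] assms show "- (((1 + c * exp x) - 1) / ((1 + c * exp x) * ln (1 + c * exp x)))
     \<le> - (((1 + c * exp y) - 1) / ((1 + c * exp y) * ln (1 + c * exp y)))"
    by simp
qed auto

lemma convex_max:
  fixes G :: "real \<Rightarrow> real"
  assumes "convex_on UNIV G" "a \<le> z" "z \<le> b"
  shows "G z \<le> max (G a) (G b)"
proof (cases "a = b")
  case True then show ?thesis using assms by simp
next
  case False
  then have ab: "a < b" using assms by simp
  define s where "s = (z - a) / (b - a)"
  have s: "0 \<le> s" "s \<le> 1" using assms ab by (auto simp: s_def field_simps)
  have "G ((1 - s) *\<^sub>R a + s *\<^sub>R b) \<le> (1 - s) * G a + s * G b"
    by (rule convex_onD[OF assms(1)]) (use s in auto)
  moreover have "(1 - s) *\<^sub>R a + s *\<^sub>R b = z"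
  proof -
    have "s * (b - a) = z - a" using ab by (simp add: s_def)
    then show ?thesis by (simp add: algebra_simps)
  qed
  moreover have "(1 - s) * G a + s * G b \<le> max (G a) (G b)"
    using s by (smt (verit) convex_bound_le max.cobounded1 max.cobounded2)
  ultimately show ?thesis by simp
qed

theorem lemma1:
  fixes K k M L :: nat
    and p :: "nat \<Rightarrow> real" and h :: "nat \<Rightarrow> complex"
    and s d :: "nat \<Rightarrow> real ^ 'n" and \<sigma>2 :: "nat \<Rightarrow> real"
    and w pc Pmax ber :: real
  assumes "k < K"
    and "\<And>j. j < K \<Longrightarrow> h j \<noteq> 0"
    and "\<And>j. j < K \<Longrightarrow> norm (s j) = 1"
    and "\<And>j. j < K \<Longrightarrow> d j \<bullet> s j = 1"
    and "\<And>j. j < K \<Longrightarrow> \<sigma>2 j > 0"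
    and "\<And>j. j < K \<Longrightarrow> j \<noteq> k \<Longrightarrow> p j \<ge> 0"
    and "w > 0" and "M \<ge> 1" and "L \<le> M" and "pc > 0" and "Pmax > 0"
    and "0 < ber" and "ber < 1/5"
  shows "\<forall>x1\<in>{0..Pmax}. \<forall>x2\<in>{0..Pmax}. \<forall>t\<in>{0<..<1::real}. x1 \<noteq> x2 \<longrightarrow>
           utility K (p(k := t * x1 + (1 - t) * x2)) h s d \<sigma>2 w M L pc ber k
           \<ge> min (utility K (p(k := x1)) h s d \<sigma>2 w M L pc ber k)
                  (utility K (p(k := x2)) h s d \<sigma>2 w M L pc ber k)"
proof (intro ballI impI)
  fix x1 x2 t :: real
  assume x1: "x1 \<in> {0..Pmax}" and x2: "x2 \<in> {0..Pmax}" and t: "t \<in> {0<..<1}"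
  define D where "D = interf_noise K p h s d \<sigma>2 k"
  have Deq: "interf_noise K (p(k := x)) h s d \<sigma>2 k = D" for x
    unfolding D_def interf_noise_def by (intro arg_cong2[where f="(+)"] sum.cong) auto
  have "d k \<noteq> 0" using assms(4)[OF assms(1)] by auto
  then have dd: "d k \<bullet> d k > 0" by simp
  have "(\<Sum>j\<in>{..<K} - {k}. p j * (cmod (h j))\<^sup>2 * (d k \<bullet> s j)\<^sup>2) \<ge> 0"
    using assms(6) by (intro sum_nonneg) auto
  moreover have "\<sigma>2 k * (d k \<bullet> d k) > 0" using assms(5)[OF assms(1)] dd by simp
  ultimately have Dpos: "D > 0" unfolding D_def interf_noise_def by linarith
  define a where "a = (cmod (h k))\<^sup>2 / D"
  have apos: "a > 0" using Dpos assms(2)[OF assms(1)] by (simp add: a_def)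
  have "5 * ber < 1" using assms by simp
  then have "ln (5 * ber) < 0" using assms by simp
  then have gpos: "gap ber > 0" unfolding gap_def by (simp add: divide_neg_neg)
  define c where "c = gap ber * a"
  have cpos: "c > 0" using gpos apos by (simp add: c_def)
  define F where "F x = ln (1 + c * x) * (1 - exp (- (a * x))) ^ M / (x + pc)" for x
  define Kc where "Kc = real L / real M * w / ln 2"
  have Kc: "Kc \<ge> 0" using assms by (simp add: Kc_def)
  have U: "utility K (p(k := x)) h s d \<sigma>2 w M L pc ber k = Kc * F x" for x
  proof -
    have "sinr K (p(k := x)) h s d \<sigma>2 k = a * x"
      unfolding sinr_def Deq a_def by simp
    then show ?thesis unfolding utility_def Let_def F_def Kc_def log_def c_def
      by (simp add: field_simps)
  qed
  have F0: "F 0 = 0" by (simp add: F_def)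
  have Fnn: "F x \<ge> 0" if "x \<ge> 0" for x
    unfolding F_def using that cpos apos assms(10)
    by (intro divide_nonneg_pos mult_nonneg_nonneg zero_le_power) auto
  define G where "G z = - ln (ln (1 + c * exp z)) + real M * (- ln (1 - exp (- (a * exp z)))) + ln (exp z + pc)" for z
  have Gc: "convex_on UNIV G"
    unfolding G_def[abs_def]
    by (intro convex_on_add convex_on_cmul C1 C2 C3 cpos apos assms(10)) auto
  have FG: "F x = exp (- G (ln x))" if "x > 0" for x
  proof -
    have l: "ln (1 + c * x) > 0" using cpos that by (intro ln_gt_zero) (simp add: add_pos_pos)
    have e: "1 - exp (- (a * x)) > 0" using apos that by simp
    have "exp (- G (ln x)) = exp (ln (ln (1 + c * x)) + ln ((1 - exp (- (a * x))) ^ M) - ln (x + pc))"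
      using that e by (simp add: G_def ln_realpow)
    also have "\<dots> = ln (1 + c * x) * (1 - exp (- (a * x))) ^ M / (x + pc)"
      using l e that assms(10) by (simp add: exp_add exp_diff)
    finally show ?thesis by (simp add: F_def)
  qed
  define x where "x = t * x1 + (1 - t) * x2"
  have xb: "min x1 x2 \<le> x" "x \<le> max x1 x2"
  proof -
    have e1: "x - x1 = (1 - t) * (x2 - x1)" and e2: "x - x2 = t * (x1 - x2)"
      by (simp_all add: x_def algebra_simps)
    have t0: "0 < t" "t < 1" using t by auto
    show "min x1 x2 \<le> x"
    proof (cases "x1 \<le> x2")
      case True
      have "(1 - t) * (x2 - x1) \<ge> 0" using True t0 by simp
      then show ?thesis using e1 True by (simp add: min_def)
    next
      case False
      have "t * (x1 - x2) \<ge> 0" using False t0 by simp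
      then show ?thesis using e2 False by (simp add: min_def)
    qed
    show "x \<le> max x1 x2"
    proof (cases "x1 \<le> x2")
      case True
      have "t * (x1 - x2) \<le> 0" using True t0 by (simp add: mult_nonneg_nonpos)
      then show ?thesis using e2 True by (simp add: max_def)
    next
      case False
      have "(1 - t) * (x2 - x1) \<le> 0" using False t0 by (simp add: mult_nonneg_nonpos)
      then show ?thesis using e1 False by (simp add: max_def)
    qed
  qed
  have key: "F x \<ge> min (F x1) (F x2)"
  proof (cases "x1 = 0 \<or> x2 = 0")
    case True
    have "x \<ge> 0" using xb x1 x2 by auto
    then show ?thesis using True F0 Fnn[of x] by auto
  next
    case False
    then have p1: "x1 > 0" and p2: "x2 > 0" using x1 x2 by auto
    have xp: "x > 0" using xb p1 p2 by (simp add: min_def split: if_splits)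
    have "ln (min x1 x2) \<le> ln x" "ln x \<le> ln (max x1 x2)" using xb xp p1 p2 by auto
    then have "G (ln x) \<le> max (G (ln (min x1 x2))) (G (ln (max x1 x2)))"
      by (rule convex_max[OF Gc])
    then have "G (ln x) \<le> max (G (ln x1)) (G (ln x2))"
      by (cases "x1 \<le> x2") (auto simp: min_def max_def split: if_splits)
    then show ?thesis using FG[OF xp] FG[OF p1] FG[OF p2] by (auto simp: min_def max_def)
  qed
  have "Kc * F x \<ge> min (Kc * F x1) (Kc * F x2)"
    using mult_left_mono[OF key Kc] by (simp add: min_def split: if_splits)
  then show "utility K (p(k := t * x1 + (1 - t) * x2)) h s d \<sigma>2 w M L pc ber k
           \<ge> min (utility K (p(k := x1)) h s d \<sigma>2 w M L pc ber k)
                  (utility K (p(k := x2)) h s d \<sigma>2 w M L pc ber k)"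
    unfolding U x_def .
qed

end
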